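(* Let $\lambda$ be a dominant integral weight of $\mathfrak{sl}_{r+1}$ and let $b\in\mathcal{B}(\lambda+\rho)$. Let $\psi_{\mathbf i}(b)=(a_{i,j})_{1\le j\le i\le r}$ be the BZL path of $b$ with respect to the long word $\mathbf i=(1,2,1,3,2,1,\dots,r,r-1,\dots,2,1)$, written in triangular form, and let $\mathbf a(b)=(\mathbf a_{i,j})_{1\le i\le j\le r}$ be the tableau data of $b$. Then for all $1\le j\le i\le r$, \[ a_{i,j}=\mathbf a_{i-j+1,\,i}, \] i.e. $a_{i,j}$ equals the number of entries equal to $i+1$ lying in rows $1$ through $i-j+1$ of $b$.
   Context: Fix $r\ge1$ and $\mathfrak g=\mathfrak{sl}_{r+1}$ with index set $I=\{1,\dots,r\}$, simple roots $\alpha_1,\dots,\alpha_r$, fundamental weights $\omega_1,\dots,\omega_r$, positive roots $\Phi^+$, $N=|\Phi^+|=r(r+1)/2$, and $\rho=\sum_i\omega_i$. For a dominant integral weight $\mu=\sum_i m_i\omega_i$, the crystal $\mathcal B(\mu)$ is identified (Kashiwara–Nakashima) with the set of semistandard Young tableaux with entries in $\{1,\dots,r+1\}$ of the shape having $m_i$ columns of height $i$. An entry equal to $k$ is called a $k$-box (of color $k$). A tableau is identified with the tensor product $b_1\otimes\cdots\otimes b_m$ of its entries read column by column from the rightmost column to the leftmost, each column from top to bottom. The Kashiwara operators $\tilde e_i,\tilde f_i$ act by the signature rule: for each factor $b_k$ (in order) write $-$ if $b_k=i+1$, $+$ if $b_k=i$, and nothing otherwise; repeatedly cancel adjacent pairs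 $+-$ (a $+$ immediately followed by a $-$); then $\tilde e_i$ changes the factor corresponding to the rightmost remaining $-$ from $i+1$ to $i$ (and $\tilde e_ib=0$ if no $-$ remains), and $\tilde f_i$ changes the factor corresponding to the leftmost remaining $+$ from $i$ to $i+1$ (and $\tilde f_ib=0$ if no $+$ remains). The weight of a tableau is $\sum_k \epsilon_{c_k}$ restricted to $\mathfrak{sl}_{r+1}$, where $c_k$ runs over its entries and $\epsilon_c$ are the standard weights. Fix the long word $\mathbf i=(i_1,\dots,i_N)=(1,2,1,3,2,1,\dots,r,r-1,\dots,2,1)$ of the longest Weyl group element. The BZL path $\psi_{\mathbf i}(b)=(a_1,\dots,a_N)$ is defined inductively: $a_k$ is the maximal integer such that $\tilde e_{i_k}^{a_k}\tilde e_{i_{k-1}}^{a_{k-1}}\cdots\tilde e_{i_1}^{a_1}b\ne0$. It is written in triangular form $(a_{1,1};a_{2,1},a_{2,2};\dots;a_{r,1},\dots,a_{r,r})$, so $a_{i,j}=a_{i(i-1)/2+j}$ and corresponds to the letter $i_{i(i-1)/2+j}=i-j+1$. For a tableau $b\in\mathcal B(\lambda+\rho)$ and $1\le i\le j\le r$, $\mathbf a_{i,j}$ denotes the number of $(j+1)$-boxes in rows $1$ through $i$ of $b$, and $\mathbf a(b)=(\mathbf a_{1,1},\dots,\mathbf a_{1,r};\mathbf a_{2,2},\dots,\mathbf a_{2,r};\dots;\mathbf a_{r,r})$. *)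

theory Defs
  imports Main
begin

text \<open>A tableau is identified with the word (list of entries) obtained by reading
columns from the rightmost to the leftmost, each column from top to bottom.
The operator e_i acts on such words by the signature rule; None represents 0.\<close>

text \<open>Signature of colour i: list of (position, sign), sign True = plus (entry i),
sign False = minus (entry i+1), in order of positions.\<close>
definition signature :: "nat \<Rightarrow> nat list \<Rightarrow> (nat \<times> bool) list" where
  "signature i w = [(k, w ! k = i). k \<leftarrow> [0..<length w], w ! k = i \<or> w ! k = Suc i]"

fun cancel_step :: "(nat \<times> bool) list \<Rightarrow> (nat \<times> bool) list option" where
  "cancel_step ((p, True) # (q, False) # xs) = Some xs"
| "cancel_step (x # xs) = map_option (Cons x) (cancel_step xs)"
| "cancel_step [] = None"

definition cancel_once :: "(nat \<times> bool) list \<Rightarrow> (nat \<times> bool) list" where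
  "cancel_once s = (case cancel_step s of None \<Rightarrow> s | Some s' \<Rightarrow> s')"

text \<open>Repeated cancellation; length s rounds suffice since each round removes two signs.\<close>
definition reduced_signature :: "nat \<Rightarrow> nat list \<Rightarrow> (nat \<times> bool) list" where
  "reduced_signature i w = (cancel_once ^^ length (signature i w)) (signature i w)"

definition kashiwara_e :: "nat \<Rightarrow> nat list \<Rightarrow> nat list option" where
  "kashiwara_e i w =
     (let minus = [p. (p, s) \<leftarrow> reduced_signature i w, \<not> s]
      in if minus = [] then None else Some (w[last minus := i]))"

fun kashiwara_e_iter :: "nat \<Rightarrow> nat \<Rightarrow> nat list \<Rightarrow> nat list option" where
  "kashiwara_e_iter i 0 w = Some w"
| "kashiwara_e_iter i (Suc n) w = Option.bind (kashiwara_e_iter i n w) (kashiwara_e i)"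

fun bzl_path :: "nat list \<Rightarrow> nat list \<Rightarrow> nat list" where
  "bzl_path [] w = []"
| "bzl_path (i # is) w =
     (let a = (GREATEST n. kashiwara_e_iter i n w \<noteq> None)
      in a # bzl_path is (the (kashiwara_e_iter i a w)))"

definition long_word :: "nat \<Rightarrow> nat list" where
  "long_word r = concat [rev [1..<Suc k]. k \<leftarrow> [1..<Suc r]]"

text \<open>A tableau is a list of rows (row 1 first), each a list of entries.
The shape of B(lambda + rho) has lambda_i + 1 columns of height i for i = 1..r,
so row k (1-based) has length sum_{i=k}^r (lambda_i + 1).\<close>
definition ssyt_lambda_rho :: "nat \<Rightarrow> (nat \<Rightarrow> nat) \<Rightarrow> nat list list \<Rightarrow> bool" where
  "ssyt_lambda_rho r lam T \<longleftrightarrow>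
     length T = r
   \<and> (\<forall>k<r. length (T ! k) = (\<Sum>i\<in>{Suc k..r}. lam i + 1))
   \<and> (\<forall>k<r. sorted (T ! k))
   \<and> (\<forall>k. Suc k < r \<longrightarrow> (\<forall>c < length (T ! Suc k). T ! k ! c < T ! Suc k ! c))
   \<and> (\<forall>k<r. \<forall>x\<in>set (T ! k). 1 \<le> x \<and> x \<le> Suc r)"

definition reading_word :: "nat list list \<Rightarrow> nat list" where
  "reading_word T = concat
     [[T ! k ! c. k \<leftarrow> [0..<length T], c < length (T ! k)]. c \<leftarrow> rev [0..<length (T ! 0)]]"

definition tableau_data :: "nat list list \<Rightarrow> nat \<Rightarrow> nat \<Rightarrow> nat" where
  "tableau_data T i j = (\<Sum>k<i. count_list (T ! k) (Suc j))"

end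

theory Submission
  imports Defs
begin


lemma concat_if_filter: "concat (map (\<lambda>k. if P k then [f k] else []) xs) = map f (filter P xs)"
  by (induction xs) auto

lemma sig_eq: "signature i w = map (\<lambda>k. (k, w!k = i)) (filter (\<lambda>k. w!k = i \<or> w!k = Suc i) [0..<length w])"
  unfolding signature_def by (simp add: concat_if_filter)

definition mn :: "nat \<Rightarrow> nat \<times> bool" where "mn p = (p, False)"

fun blk :: "nat \<times> nat option \<Rightarrow> (nat \<times> bool) list" where
  "blk (p, None) = [(p, True)]"
| "blk (p, Some q) = [(p, True), (q, False)]"

fun del1 :: "(nat \<times> nat option) list \<Rightarrow> (nat \<times> nat option) list" where
  "del1 [] = []"
| "del1 ((p, None) # bs) = (p, None) # del1 bs"
| "del1 ((p, Some q) # bs) = bs"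

definition nS :: "(nat \<times> nat option) list \<Rightarrow> nat" where
  "nS bs = length (filter (\<lambda>x. snd x \<noteq> None) bs)"

lemma nS_del1: "nS (del1 bs) = nS bs - 1"
  by (induction bs rule: del1.induct) (auto simp: nS_def)

lemma del1_id: "nS bs = 0 \<Longrightarrow> del1 bs = bs"
  by (induction bs rule: del1.induct) (auto simp: nS_def)

lemma cancel_minus: "cancel_step (map mn A @ s) = map_option (\<lambda>s'. map mn A @ s') (cancel_step s)"
proof (induction A)
  case Nil show ?case by (cases "cancel_step s") auto
qed (auto simp: mn_def option.map_comp o_def)

lemma cancel_blocks: "cancel_step (concat (map blk bs)) =
   (if nS bs = 0 then None else Some (concat (map blk (del1 bs))))"
proof (induction bs rule: del1.induct)
  case 1
  then show ?case by (simp add: nS_def)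
next
  case (2 p bs)
  show ?case
  proof (cases bs)
    case Nil
    then show ?thesis by (simp add: nS_def)
  next
    case (Cons b bs')
    obtain q o' where b: "b = (q, o')" by (cases b)
    have "concat (map blk bs) = (q, True) # tl (concat (map blk bs))"
      using Cons b by (cases o') auto
    then have "cancel_step (concat (map blk ((p, None) # bs))) =
       map_option ((#) (p, True)) (cancel_step (concat (map blk bs)))"
      by (metis blk.simps(1) cancel_step.simps(4) concat.simps(2) append_Cons append_Nil list.simps(9))
    then show ?thesis using 2 by (auto simp: nS_def)
  qed
next
  case (3 p q bs)
  then show ?case by (simp add: nS_def)
qed

lemma cancel_once_form: "cancel_once (map mn A @ concat (map blk bs)) = map mn A @ concat (map blk (del1 bs))"
  unfolding cancel_once_def cancel_minus cancel_blocks by (auto simp: del1_id)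

lemma cancel_pow_form: "(cancel_once ^^ n) (map mn A @ concat (map blk bs)) = map mn A @ concat (map blk ((del1 ^^ n) bs))"
  by (induction n) (auto simp: cancel_once_form)

lemma nS_pow: "nS ((del1 ^^ n) bs) = nS bs - n"
  by (induction n) (auto simp: nS_del1)

lemma nS_le: "nS bs \<le> length (concat (map blk bs))"
proof (induction bs)
  case (Cons b bs) then show ?case by (cases b; cases "snd b") (auto simp: nS_def)
qed (simp add: nS_def)

lemma blocks_plus: "nS bs = 0 \<Longrightarrow> [p. (p, s) \<leftarrow> concat (map blk bs), \<not> s] = []"
proof (induction bs)
  case (Cons b bs) then show ?case by (cases b; cases "snd b") (auto simp: nS_def)
qed simp

lemma minus_extract: "[p. (p, s) \<leftarrow> map mn A, \<not> s] = A"
  by (induction A) (auto simp: mn_def)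

lemma kash_form:
  assumes "signature i w = map mn A @ concat (map blk bs)"
  shows "kashiwara_e i w = (if A = [] then None else Some (w[last A := i]))"
proof -
  have "reduced_signature i w = map mn A @ concat (map blk ((del1 ^^ length (signature i w)) bs))"
    unfolding reduced_signature_def assms cancel_pow_form ..
  moreover have "nS ((del1 ^^ length (signature i w)) bs) = 0"
    unfolding nS_pow assms using nS_le[of bs] by simp
  ultimately have "[p. (p, s) \<leftarrow> reduced_signature i w, \<not> s] = A"
    using blocks_plus minus_extract by simp
  then show ?thesis unfolding kashiwara_e_def by simp
qed
definition upd :: "nat list \<Rightarrow> nat set \<Rightarrow> nat \<Rightarrow> nat list" where
  "upd w S v = map (\<lambda>k. if k \<in> S then v else w!k) [0..<length w]"

lemma upd_empty: "upd w {} v = w"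
  unfolding upd_def by (simp add: map_nth)

lemma length_upd[simp]: "length (upd w S v) = length w"
  unfolding upd_def by simp

lemma nth_upd: "k < length w \<Longrightarrow> upd w S v ! k = (if k \<in> S then v else w!k)"
  unfolding upd_def by simp

lemma upd_insert: "p < length w \<Longrightarrow> (upd w S v)[p := v] = upd w (insert p S) v"
  by (rule nth_equalityI) (auto simp: nth_upd nth_list_update)

lemma sig_upd:
  assumes "\<forall>k\<in>S. k < length w \<and> w!k = Suc i"
  shows "signature i (upd w S i) = map (\<lambda>(k,s). (k, s \<or> k \<in> S)) (signature i w)"
proof -
  have f: "filter (\<lambda>k. upd w S i!k = i \<or> upd w S i!k = Suc i) [0..<length w]
        = filter (\<lambda>k. w!k = i \<or> w!k = Suc i) [0..<length w]"
    by (rule filter_cong) (use assms in \<open>auto simp: nth_upd\<close>)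
  show ?thesis unfolding sig_eq length_upd f map_map
    by (rule map_cong) (use assms in \<open>auto simp: nth_upd\<close>)
qed

lemma sig_props:
  "distinct (map fst (signature i w))"
  "(k, s) \<in> set (signature i w) \<Longrightarrow> k < length w \<and> (s \<longleftrightarrow> w!k = i) \<and> (w!k = i \<or> w!k = Suc i)"
  unfolding sig_eq by (auto simp: map_map o_def)

lemma blocks_fst_map: "map (\<lambda>(k,s). (k, s \<or> k \<in> D)) (concat (map blk bs)) = concat (map blk bs)"
  if "\<forall>x \<in> set (concat (map blk bs)). fst x \<notin> D"
  using that
proof (induction bs)
  case (Cons b bs) then show ?case by (cases b; cases "snd b") auto
qed simp

lemma blocks_true: "map (\<lambda>p. (p, True)) D @ concat (map blk bs) = concat (map blk (map (\<lambda>p. (p, None)) D @ bs))"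
  by (induction D) auto

lemma sig_after:
  assumes sig: "signature i w = map mn A @ concat (map blk bs)"
  shows "signature i (upd w (set (drop m A)) i) = map mn (take m A) @ concat (map blk (map (\<lambda>p. (p, None)) (drop m A) @ bs))"
    and "\<forall>k\<in>set A. k < length w \<and> w!k = Suc i"
proof -
  define D where "D = drop m A"
  have dist: "distinct (map fst (map mn A @ concat (map blk bs)))"
    using sig_props(1)[of i w] sig by simp
  then have dA: "distinct A" and disj: "\<forall>x \<in> set (concat (map blk bs)). fst x \<notin> set A"
    by (auto simp: mn_def map_map o_def)
  show Aprop: "\<forall>k\<in>set A. k < length w \<and> w!k = Suc i"
  proof
    fix k assume "k \<in> set A"
    then have "(k, False) \<in> set (signature i w)" using sig by (auto simp: mn_def)
    from sig_props(2)[OF this] show "k < length w \<and> w!k = Suc i" by auto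
  qed
  have AD: "A = take m A @ D" using D_def by simp
  have Dsub: "set D \<subseteq> set A" using D_def by (meson set_drop_subset)
  have tD: "set (take m A) \<inter> set D = {}"
    using dA AD distinct_append[of "take m A" D] by auto
  have "signature i (upd w (set D) i) = map (\<lambda>(k,s). (k, s \<or> k \<in> set D)) (map mn A @ concat (map blk bs))"
    using sig_upd[of "set D" w i] Aprop Dsub sig by auto
  also have "\<dots> = map mn (take m A) @ map (\<lambda>p. (p, True)) D @ concat (map blk bs)"
  proof -
    have 1: "map (\<lambda>(k,s). (k, s \<or> k \<in> set D)) (map mn (take m A)) = map mn (take m A)"
      using tD by (auto simp: mn_def)
    have 2: "map (\<lambda>(k,s). (k, s \<or> k \<in> set D)) (map mn D) = map (\<lambda>p. (p, True)) D"
      by (auto simp: mn_def)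
    have 3: "map (\<lambda>(k,s). (k, s \<or> k \<in> set D)) (concat (map blk bs)) = concat (map blk bs)"
      using disj Dsub by (intro blocks_fst_map) auto
    have "map mn A = map mn (take m A) @ map mn D" using AD by (metis map_append)
    then show ?thesis by (simp only: map_append 1 2 3 append_assoc)
  qed
  also have "\<dots> = map mn (take m A) @ concat (map blk (map (\<lambda>p. (p, None)) D @ bs))"
    by (simp add: blocks_true)
  finally show "signature i (upd w (set (drop m A)) i) = map mn (take m A) @ concat (map blk (map (\<lambda>p. (p, None)) (drop m A) @ bs))"
    unfolding D_def .
qed

lemma iter_form:
  assumes sig: "signature i w = map mn A @ concat (map blk bs)"
  shows "n \<le> length A \<Longrightarrow> kashiwara_e_iter i n w = Some (upd w (set (drop (length A - n) A)) i)"
proof (induction n)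
  case 0 then show ?case by (simp add: upd_empty)
next
  case (Suc n)
  define m where "m = length A - n"
  have m1: "m \<ge> 1" using Suc.prems m_def by simp
  define D where "D = drop m A"
  note sig2 = sig_after(1)[OF sig, of m, folded D_def]
  note Aprop = sig_after(2)[OF sig]
  have ne: "take m A \<noteq> []" using m1 Suc.prems m_def by auto
  have lastt: "last (take m A) = A ! (m - 1)"
  proof -
    have "length (take m A) = m" using Suc.prems m_def by simp
    then show ?thesis using last_conv_nth[OF ne] m1 by simp
  qed
  have dd: "drop (m - 1) A = A ! (m - 1) # D"
  proof -
    have sm: "Suc (m - 1) = m" using m1 by simp
    have "m - 1 < length A" using m_def Suc.prems by simp
    from Cons_nth_drop_Suc[OF this] show ?thesis unfolding sm D_def by simp
  qed
  have lt: "A ! (m - 1) < length w" using Aprop m1 Suc.prems m_def by auto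
  have "kashiwara_e_iter i (Suc n) w = kashiwara_e i (upd w (set D) i)"
    using Suc m_def D_def by simp
  also have "\<dots> = Some ((upd w (set D) i)[A ! (m - 1) := i])"
    using kash_form[OF sig2] ne lastt by simp
  also have "\<dots> = Some (upd w (set (drop (m - 1) A)) i)"
    using upd_insert[OF lt] dd by simp
  moreover have "m - 1 = length A - Suc n" using m_def by simp
  ultimately show ?case by simp
qed

lemma iter_none:
  assumes sig: "signature i w = map mn A @ concat (map blk bs)"
  shows "n > length A \<Longrightarrow> kashiwara_e_iter i n w = None"
proof (induction n)
  case 0 then show ?case by simp
next
  case (Suc n)
  show ?case
  proof (cases "n = length A")
    case True
    have "kashiwara_e_iter i n w = Some (upd w (set A) i)"
      using iter_form[OF sig, of n] True by simp
    moreover have "kashiwara_e i (upd w (set A) i) = None"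
      using kash_form[OF sig_after(1)[OF sig, of 0]] by simp
    ultimately show ?thesis by simp
  next
    case False
    then show ?thesis using Suc by simp
  qed
qed

lemma emax:
  assumes sig: "signature i w = map mn A @ concat (map blk bs)"
  shows "(GREATEST n. kashiwara_e_iter i n w \<noteq> None) = length A"
    and "the (kashiwara_e_iter i (length A) w) = upd w (set A) i"
proof -
  show "(GREATEST n. kashiwara_e_iter i n w \<noteq> None) = length A"
  proof (rule Greatest_equality)
    show "kashiwara_e_iter i (length A) w \<noteq> None" using iter_form[OF sig, of "length A"] by simp
  next
    fix y assume "kashiwara_e_iter i y w \<noteq> None"
    then show "y \<le> length A" using iter_none[OF sig, of y] by (meson not_le)
  qed
  show "the (kashiwara_e_iter i (length A) w) = upd w (set A) i"
    using iter_form[OF sig, of "length A"] by simp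
qed


lemma suf_blocks:
  assumes c2: "\<forall>q. P \<le> q \<and> q < length w \<and> w!q = Suc i \<longrightarrow> P < q \<and> w!(q-1) = i"
  shows "P \<le> m \<Longrightarrow> m \<le> length w \<Longrightarrow> (m < length w \<longrightarrow> w!m \<noteq> Suc i) \<Longrightarrow>
    \<exists>bs. map (\<lambda>k. (k, w!k = i)) (filter (\<lambda>k. w!k = i \<or> w!k = Suc i) [m..<length w]) = concat (map blk bs)"
proof (induction "length w - m" arbitrary: m rule: less_induct)
  case less
  show ?case
  proof (cases "m = length w")
    case True then show ?thesis by (intro exI[of _ "[]"]) simp
  next
    case False
    then have ml: "m < length w" using less.prems by simp
    have up: "[m..<length w] = m # [Suc m..<length w]" using ml by (simp add: upt_conv_Cons)
    show ?thesis
    proof (cases "w!m = i")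
      case wi: True
      show ?thesis
      proof (cases "Suc m < length w \<and> w!(Suc m) = Suc i")
        case True
        have up2: "[Suc m..<length w] = Suc m # [Suc (Suc m)..<length w]" using True by (simp add: upt_conv_Cons)
        have "Suc (Suc m) < length w \<longrightarrow> w!(Suc (Suc m)) \<noteq> Suc i"
        proof (intro impI notI)
          assume a: "Suc (Suc m) < length w" and b: "w!(Suc (Suc m)) = Suc i"
          from c2[rule_format, of "Suc (Suc m)"] a b less.prems have "w!(Suc m) = i" by simp
          then show False using True by simp
        qed
        then have "\<exists>bs. map (\<lambda>k. (k, w!k = i)) (filter (\<lambda>k. w!k = i \<or> w!k = Suc i) [Suc (Suc m)..<length w]) = concat (map blk bs)"
          by (intro less.hyps) (use less.prems True in auto)
        then obtain bs where bs: "map (\<lambda>k. (k, w!k = i)) (filter (\<lambda>k. w!k = i \<or> w!k = Suc i) [Suc (Suc m)..<length w]) = concat (map blk bs)"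
          by blast
        show ?thesis
        proof -
          have "map (\<lambda>k. (k, w!k = i)) (filter (\<lambda>k. w!k = i \<or> w!k = Suc i) [m..<length w]) = (m, True) # (Suc m, False) # map (\<lambda>k. (k, w!k = i)) (filter (\<lambda>k. w!k = i \<or> w!k = Suc i) [Suc (Suc m)..<length w])"
            unfolding up up2 using wi True by simp
          then show ?thesis unfolding bs by (intro exI[of _ "(m, Some (Suc m)) # bs"]) simp
        qed
      next
        case False
        then have "\<exists>bs. map (\<lambda>k. (k, w!k = i)) (filter (\<lambda>k. w!k = i \<or> w!k = Suc i) [Suc m..<length w]) = concat (map blk bs)"
          by (intro less.hyps) (use less.prems ml False in auto)
        then obtain bs where bs: "map (\<lambda>k. (k, w!k = i)) (filter (\<lambda>k. w!k = i \<or> w!k = Suc i) [Suc m..<length w]) = concat (map blk bs)"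
          by blast
        show ?thesis
        proof -
          have "map (\<lambda>k. (k, w!k = i)) (filter (\<lambda>k. w!k = i \<or> w!k = Suc i) [m..<length w]) = (m, True) # map (\<lambda>k. (k, w!k = i)) (filter (\<lambda>k. w!k = i \<or> w!k = Suc i) [Suc m..<length w])"
            unfolding up using wi by simp
          then show ?thesis unfolding bs by (intro exI[of _ "(m, None) # bs"]) simp
        qed
      qed
    next
      case wni: False
      have wns: "w!m \<noteq> Suc i" using less.prems ml by simp
      have "Suc m < length w \<longrightarrow> w!(Suc m) \<noteq> Suc i"
      proof (intro impI notI)
        assume a: "Suc m < length w" and b: "w!(Suc m) = Suc i"
        from c2[rule_format, of "Suc m"] a b less.prems have "w!m = i" by simp
        then show False using wni by simp
      qed
      then have "\<exists>bs. map (\<lambda>k. (k, w!k = i)) (filter (\<lambda>k. w!k = i \<or> w!k = Suc i) [Suc m..<length w]) = concat (map blk bs)"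
        by (intro less.hyps) (use less.prems ml in auto)
      then obtain bs where bs: "map (\<lambda>k. (k, w!k = i)) (filter (\<lambda>k. w!k = i \<or> w!k = Suc i) [Suc m..<length w]) = concat (map blk bs)"
        by blast
      show ?thesis
      proof -
        have "map (\<lambda>k. (k, w!k = i)) (filter (\<lambda>k. w!k = i \<or> w!k = Suc i) [m..<length w]) = map (\<lambda>k. (k, w!k = i)) (filter (\<lambda>k. w!k = i \<or> w!k = Suc i) [Suc m..<length w])"
          unfolding up using wni wns by simp
        then show ?thesis unfolding bs by blast
      qed
    qed
  qed
qed

lemma wc_form:
  assumes Pl: "P \<le> length w"
    and c1: "\<forall>k<P. w!k \<noteq> i"
    and c2: "\<forall>q. P \<le> q \<and> q < length w \<and> w!q = Suc i \<longrightarrow> P < q \<and> w!(q-1) = i"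
  shows "\<exists>bs. signature i w = map mn (filter (\<lambda>k. w!k = Suc i) [0..<P]) @ concat (map blk bs)"
proof -
  have up: "[0..<length w] = [0..<P] @ [P..<length w]"
    using upt_add_eq_append[of 0 P "length w - P"] Pl by simp
  have b: "P < length w \<longrightarrow> w!P \<noteq> Suc i" using c2[rule_format, of P] by auto
  have "\<exists>bs. map (\<lambda>k. (k, w!k = i)) (filter (\<lambda>k. w!k = i \<or> w!k = Suc i) [P..<length w]) = concat (map blk bs)"
    by (rule suf_blocks[OF c2]) (use Pl b in auto)
  then obtain bs where bs: "map (\<lambda>k. (k, w!k = i)) (filter (\<lambda>k. w!k = i \<or> w!k = Suc i) [P..<length w]) = concat (map blk bs)"
    by blast
  have f1: "filter (\<lambda>k. w!k = i \<or> w!k = Suc i) [0..<P] = filter (\<lambda>k. w!k = Suc i) [0..<P]"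
    by (rule filter_cong) (use c1 in auto)
  have f2: "map (\<lambda>k. (k, w!k = i)) (filter (\<lambda>k. w!k = Suc i) [0..<P]) = map mn (filter (\<lambda>k. w!k = Suc i) [0..<P])"
    by (rule map_cong) (auto simp: mn_def)
  show ?thesis unfolding sig_eq up filter_append map_append f1 f2 bs by blast
qed




lemma filt_down: "(\<forall>k k'. k \<le> k' \<longrightarrow> k' < n \<longrightarrow> Q k' \<longrightarrow> Q k) \<Longrightarrow> filter Q [0..<n] = [0..<length (filter Q [0..<n])]"
proof (induction n)
  case (Suc n)
  show ?case
  proof (cases "Q n")
    case True
    then have "filter Q [0..<n] = [0..<n]" using Suc.prems by (intro filter_True) (metis atLeastLessThan_iff set_upt less_Suc_eq less_imp_le)
    then show ?thesis using True by simp
  next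
    case False
    then show ?thesis using Suc by simp
  qed
qed simp

lemma pred_concat: "xs = concat (map (\<lambda>c. map (\<lambda>k. (k,c)) [0..<g c]) cs) \<Longrightarrow> j < length xs \<Longrightarrow> xs!j = (Suc k, c) \<Longrightarrow> j \<ge> 1 \<and> xs!(j-1) = (k,c)"
proof (induction cs arbitrary: xs j)
  case Nil then show ?case by simp
next
  case (Cons c0 cs)
  define rest where "rest = concat (map (\<lambda>c. map (\<lambda>k. (k,c)) [0..<g c]) cs)"
  have xs: "xs = map (\<lambda>k. (k,c0)) [0..<g c0] @ rest" using Cons.prems rest_def by simp
  show ?case
  proof (cases "j < g c0")
    case True
    then have "xs!j = (j, c0)" using xs by (simp add: nth_append)
    then have "j = Suc k" "c = c0" using Cons.prems by auto
    then show ?thesis using xs True by (simp add: nth_append)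
  next
    case False
    then have "rest!(j - g c0) = (Suc k, c)" "j - g c0 < length rest"
      using xs Cons.prems by (auto simp: nth_append)
    then have "j - g c0 \<ge> 1 \<and> rest!(j - g c0 - 1) = (k,c)" using Cons.IH rest_def by blast
    then show ?thesis using xs False by (auto simp: nth_append)
  qed
qed

fun runw :: "nat list \<Rightarrow> nat list \<Rightarrow> nat list" where
  "runw [] w = w"
| "runw (i # is) w = runw is (the (kashiwara_e_iter i (GREATEST n. kashiwara_e_iter i n w \<noteq> None) w))"

lemma bzl_append: "bzl_path (xs @ ys) w = bzl_path xs w @ bzl_path ys (runw xs w)"
  by (induction xs arbitrary: w) (auto simp: Let_def)

lemma runw_append: "runw (xs @ ys) w = runw ys (runw xs w)"
  by (induction xs arbitrary: w) auto

lemma tri_len: "2 * length (concat (map f [1..<i])) = i * (i - 1)" if "\<forall>k. length (f k) = k"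
proof (induction i)
  case (Suc i)
  show ?case
  proof (cases i)
    case 0 then show ?thesis by simp
  next
    case (Suc m)
    then have "[1..<Suc i] = [1..<i] @ [i]" by simp
    then show ?thesis using Suc.IH that Suc by (simp add: algebra_simps)
  qed
qed simp

lemma idx: "\<forall>k. length (f k) = k \<Longrightarrow> 1 \<le> j \<Longrightarrow> j \<le> i \<Longrightarrow> i \<le> r \<Longrightarrow>
   concat (map f [1..<Suc r]) ! (i * (i - 1) div 2 + j - 1) = f i ! (j - 1)"
proof -
  assume f: "\<forall>k. length (f k) = k" and ji: "1 \<le> j" "j \<le> i" "i \<le> r"
  have "[1..<Suc r] = [1..<i] @ [i..<Suc r]" using ji upt_add_eq_append[of 1 i "Suc r - i"] by simp
  also have "[i..<Suc r] = i # [Suc i..<Suc r]" using ji by (simp add: upt_conv_Cons)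
  finally have u: "[1..<Suc r] = [1..<i] @ i # [Suc i..<Suc r]" .
  have l: "length (concat (map f [1..<i])) = i * (i - 1) div 2" using tri_len[OF f, of i] by simp
  have ix: "i * (i - 1) div 2 + j - 1 = length (concat (map f [1..<i])) + (j - 1)" using l ji by simp
  have "j - 1 < length (f i)" using f ji by simp
  then show ?thesis unfolding u ix by (simp add: nth_append)
qed

locale tab =
  fixes r :: nat and lam :: "nat \<Rightarrow> nat" and T :: "nat list list"
  assumes ssyt: "ssyt_lambda_rho r lam T"
begin

abbreviation len :: "nat \<Rightarrow> nat" where "len k \<equiv> length (T ! k)"

lemma lenT: "length T = r" using ssyt unfolding ssyt_lambda_rho_def by simp

lemma F1: "k < r \<Longrightarrow> sorted (T!k)" using ssyt unfolding ssyt_lambda_rho_def by simp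

lemma F2: "Suc k < r \<Longrightarrow> c < len (Suc k) \<Longrightarrow> T!k!c < T!(Suc k)!c"
  using ssyt unfolding ssyt_lambda_rho_def by blast

lemma F3: "Suc k < r \<Longrightarrow> len (Suc k) \<le> len k"
proof -
  assume a: "Suc k < r"
  have "len (Suc k) = (\<Sum>i\<in>{Suc (Suc k)..r}. lam i + 1)" "len k = (\<Sum>i\<in>{Suc k..r}. lam i + 1)"
    using ssyt a unfolding ssyt_lambda_rho_def by auto
  then show ?thesis by (simp add: sum_mono2)
qed

lemma F4: "k < r \<Longrightarrow> c < len k \<Longrightarrow> 1 \<le> T!k!c \<and> T!k!c \<le> Suc r"
  using ssyt unfolding ssyt_lambda_rho_def by (meson nth_mem)

lemma G1: "k \<le> k' \<Longrightarrow> k' < r \<Longrightarrow> len k' \<le> len k"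
proof (induction k' rule: dec_induct)
  case (step n) then show ?case using F3[of n] by simp
qed simp

lemma G2: "k < k' \<Longrightarrow> k' < r \<Longrightarrow> c < len k' \<Longrightarrow> T!k!c < T!k'!c"
proof (induction k' rule: less_induct)
  case (less k')
  then obtain m where m: "k' = Suc m" by (cases k') auto
  have lm: "c < len m" using F3[of m] less.prems m by simp
  have "T!m!c < T!k'!c" using F2[of m c] less.prems m by simp
  moreover have "k = m \<or> T!k!c < T!m!c" using less.IH[of m] less.prems m lm by fastforce
  ultimately show ?case by auto
qed

lemma G2': "k \<le> k' \<Longrightarrow> k' < r \<Longrightarrow> c < len k' \<Longrightarrow> T!k!c \<le> T!k'!c"
  using G2[of k k' c] by (cases "k = k'") auto

lemma G3: "k < r \<Longrightarrow> c < len k \<Longrightarrow> Suc k \<le> T!k!c"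
proof (induction k)
  case 0 then show ?case using F4 by simp
next
  case (Suc k)
  have "c < len k" using F3[of k] Suc.prems by simp
  then show ?case using Suc F2[of k c] by fastforce
qed


definition col :: "nat \<Rightarrow> (nat \<times> nat) list" where
  "col c = [(k,c). k \<leftarrow> [0..<r], c < len k]"

definition cells :: "(nat \<times> nat) list" where
  "cells = concat (map col (rev [0..<len 0]))"

definition hh :: "nat \<Rightarrow> nat" where
  "hh c = length (filter (\<lambda>k. c < len k) [0..<r])"

lemma col_eq: "col c = map (\<lambda>k. (k,c)) [0..<hh c]"
proof -
  have "col c = map (\<lambda>k. (k,c)) (filter (\<lambda>k. c < len k) [0..<r])"
    unfolding col_def by (simp add: concat_if_filter)
  moreover have "filter (\<lambda>k. c < len k) [0..<r] = [0..<hh c]"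
    unfolding hh_def
  proof (rule filt_down)
    show "\<forall>k k'. k \<le> k' \<longrightarrow> k' < r \<longrightarrow> c < len k' \<longrightarrow> c < len k"
      using G1 by (meson less_le_trans)
  qed
  ultimately show ?thesis by simp
qed

lemma set_cols: "set (concat (map col cs)) = {(k,c). c \<in> set cs \<and> k < r \<and> c < len k}"
  unfolding col_def by auto

lemma distinct_cols: "distinct cs \<Longrightarrow> distinct (concat (map col cs))"
proof (induction cs)
  case (Cons c cs)
  have "distinct (col c)" unfolding col_eq by (simp add: distinct_map inj_on_def)
  moreover have "set (col c) \<inter> set (concat (map col cs)) = {}"
    using Cons.prems unfolding set_cols[of cs] by (auto simp: col_def)
  ultimately show ?case using Cons by simp
qed simp

lemma distinct_cells: "distinct cells"
  unfolding cells_def by (rule distinct_cols) simp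

lemma set_cells: "set cells = {(k,c). k < r \<and> c < len k}"
proof -
  have "c < len k \<Longrightarrow> k < r \<Longrightarrow> c < len 0" for k c using G1[of 0 k] by simp
  then show ?thesis unfolding cells_def set_cols by auto
qed

lemma rw_cells: "reading_word T = map (\<lambda>(k,c). T!k!c) cells"
proof -
  have "[T ! k ! c. k \<leftarrow> [0..<length T], c < length (T ! k)] = map (\<lambda>(k,c). T!k!c) (col c)" for c
    unfolding col_def lenT by (induction r) auto
  then show ?thesis unfolding reading_word_def cells_def map_concat map_map o_def by simp
qed

lemma cells_split: "C \<le> len 0 \<Longrightarrow> cells = concat (map col (rev [C..<len 0])) @ concat (map col (rev [0..<C]))"
proof -
  assume "C \<le> len 0"
  then have "[0..<len 0] = [0..<C] @ [C..<len 0]"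
    using upt_add_eq_append[of 0 C "len 0 - C"] by simp
  then show ?thesis unfolding cells_def by simp
qed


definition St :: "nat \<Rightarrow> nat \<Rightarrow> nat \<times> nat \<Rightarrow> nat" where
  "St L u x = (case x of (k,c) \<Rightarrow> if T!k!c < L then Suc k else if T!k!c = L then max (Suc k) u else T!k!c)"

definition Wd :: "nat \<Rightarrow> nat \<Rightarrow> nat list" where
  "Wd L u = map (St L u) cells"

lemma cells_valid: "p < length cells \<Longrightarrow> cells!p = (k,c) \<Longrightarrow> k < r \<and> c < len k"
  using set_cells by (metis (mono_tags, lifting) case_prodD mem_Collect_eq nth_mem)

context
  fixes rho beta :: nat
  assumes rb: "Suc rho \<le> beta" "beta \<le> r"
begin

definition C where "C = length (takeWhile (\<lambda>x. x \<le> beta) (T!rho))"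

lemma rho_r: "rho < r" using rb by simp

lemma R: "c < len rho \<Longrightarrow> (T!rho!c \<le> beta \<longleftrightarrow> c < C)"
proof
  assume c: "c < len rho" and le: "T!rho!c \<le> beta"
  show "c < C"
  proof (rule ccontr)
    assume "\<not> c < C"
    then have Cl: "C < len rho" using c by simp
    then have "\<not> T!rho!C \<le> beta" using nth_length_takeWhile C_def by metis
    moreover have "T!rho!C \<le> T!rho!c" using sorted_nth_mono[OF F1[OF rho_r]] \<open>\<not> c < C\<close> c by simp
    ultimately show False using le by simp
  qed
next
  assume "c < C"
  then have "takeWhile (\<lambda>x. x \<le> beta) (T!rho) ! c = T!rho!c" using takeWhile_nth C_def by metis
  moreover have "takeWhile (\<lambda>x. x \<le> beta) (T!rho) ! c \<in> set (takeWhile (\<lambda>x. x \<le> beta) (T!rho))"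
    using \<open>c < C\<close> C_def by simp
  ultimately show "T!rho!c \<le> beta" by (metis set_takeWhileD)
qed

lemma CL: "C \<le> len rho" "C \<le> len 0"
  using C_def length_takeWhile_le G1[of 0 rho] rho_r by (metis le_trans, metis le0 le_trans length_takeWhile_le)

definition pre where "pre = concat (map col (rev [C..<len 0]))"
definition suf where "suf = concat (map col (rev [0..<C]))"
definition PP where "PP = length pre"

lemma cells_ps: "cells = pre @ suf"
  unfolding pre_def suf_def using cells_split CL by simp

lemma pos_pre: "p < PP \<Longrightarrow> cells!p = (k,c) \<Longrightarrow> C \<le> c"
proof -
  assume "p < PP" "cells!p = (k,c)"
  then have "pre!p = (k,c)" "p < length pre" unfolding cells_ps PP_def by (auto simp: nth_append)
  then have "(k,c) \<in> set pre" by (metis nth_mem)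
  then show ?thesis unfolding pre_def set_cols by simp
qed

lemma pos_suf: "PP \<le> p \<Longrightarrow> p < length cells \<Longrightarrow> cells!p = suf!(p - PP) \<and> p - PP < length suf \<and> snd (cells!p) < C"
proof -
  assume a: "PP \<le> p" "p < length cells"
  then have 1: "cells!p = suf!(p - PP)" "p - PP < length suf" unfolding cells_ps PP_def by (auto simp: nth_append)
  then have "suf!(p-PP) \<in> set suf" by (metis nth_mem)
  then have "snd (suf!(p-PP)) < C" unfolding suf_def set_cols by auto
  then show ?thesis using 1 by simp
qed

abbreviation F where "F \<equiv> St (Suc beta) (Suc (Suc rho))"
abbreviation G where "G \<equiv> St (Suc beta) (Suc rho)"

definition SS where "SS = {(k,c). k < Suc rho \<and> c < len k \<and> T!k!c = Suc beta}"

lemma E1: "k < r \<Longrightarrow> c < len k \<Longrightarrow> F (k,c) = Suc rho \<longleftrightarrow> k = rho \<and> T!k!c \<le> beta"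
  using rb unfolding St_def by auto

lemma E_c2: "k < r \<Longrightarrow> c < len k \<Longrightarrow> c < C \<Longrightarrow> F (k,c) = Suc (Suc rho) \<Longrightarrow> k = Suc rho"
proof -
  assume v: "k < r" "c < len k" and cC: "c < C" and Fk: "F (k,c) = Suc (Suc rho)"
  have crho: "c < len rho" using cC CL by simp
  have Tr: "T!rho!c \<le> beta" using R[OF crho] cC by simp
  consider "T!k!c < Suc beta" | "T!k!c = Suc beta" | "T!k!c > Suc beta" by linarith
  then show ?thesis
  proof cases
    case 1 then show ?thesis using Fk by (simp add: St_def)
  next
    case 2
    then have "k \<le> Suc rho" using Fk by (simp add: St_def)
    moreover have "\<not> k \<le> rho"
    proof
      assume "k \<le> rho"
      then have "T!k!c \<le> T!rho!c" using G2'[of k rho c] crho rho_r by simp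
      then show False using 2 Tr by simp
    qed
    ultimately show ?thesis by simp
  next
    case 3 then show ?thesis using Fk rb by (simp add: St_def)
  qed
qed

lemma E2: "k < r \<Longrightarrow> c < len k \<Longrightarrow> (C \<le> c \<and> F (k,c) = Suc (Suc rho)) \<longleftrightarrow> (k,c) \<in> SS"
proof
  assume v: "k < r" "c < len k"
  assume a: "C \<le> c \<and> F (k,c) = Suc (Suc rho)"
  consider "T!k!c < Suc beta" | "T!k!c = Suc beta" | "T!k!c > Suc beta" by linarith
  then show "(k,c) \<in> SS"
  proof cases
    case 1
    then have k: "k = Suc rho" using a by (simp add: St_def)
    have cr: "c < len rho" using G1[of rho k] v k by simp
    then have "T!rho!c > beta" using R[OF cr] a by auto
    moreover have "T!rho!c < T!k!c" using G2[of rho k c] k v by simp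
    ultimately show ?thesis using 1 by simp
  next
    case 2
    then have "k \<le> Suc rho" using a by (simp add: St_def max_def split: if_splits)
    moreover have "k \<noteq> Suc rho"
    proof
      assume k: "k = Suc rho"
      have cr: "c < len rho" using G1[of rho k] v k by simp
      have "T!rho!c < T!k!c" using G2[of rho k c] k v by simp
      then have "c < C" using R[OF cr] 2 by simp
      then show False using a by simp
    qed
    ultimately show ?thesis using 2 v by (simp add: SS_def)
  next
    case 3 then show ?thesis using a rb by (simp add: St_def)
  qed
next
  assume v: "k < r" "c < len k"
  assume "(k,c) \<in> SS"
  then have k: "k < Suc rho" and x: "T!k!c = Suc beta" by (auto simp: SS_def)
  have F: "F (k,c) = Suc (Suc rho)" using k x by (simp add: St_def)
  have "C \<le> c"
  proof (rule ccontr)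
    assume "\<not> C \<le> c"
    then have cC: "c < C" by simp
    then have crho: "c < len rho" using CL by simp
    have "T!rho!c \<le> beta" using R[OF crho] cC by simp
    moreover have "T!k!c \<le> T!rho!c" using G2'[of k rho c] k crho rho_r by simp
    ultimately show False using x by simp
  qed
  then show "C \<le> c \<and> F (k,c) = Suc (Suc rho)" using F by simp
qed

lemma E3: "c < len k \<Longrightarrow> G (k,c) = (if (k,c) \<in> SS then Suc rho else F (k,c))"
  unfolding St_def SS_def by auto

lemma card_SS: "card SS = tableau_data T (Suc rho) beta"
proof -
  have "SS = Sigma {..<Suc rho} (\<lambda>k. {c. c < len k \<and> T!k!c = Suc beta})"
    unfolding SS_def by auto
  then have "card SS = (\<Sum>k<Suc rho. card {c. c < len k \<and> T!k!c = Suc beta})"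
    by (simp add: card_SigmaI)
  also have "\<dots> = (\<Sum>k<Suc rho. count_list (T!k) (Suc beta))"
  proof (rule sum.cong)
    fix k show "card {c. c < len k \<and> T!k!c = Suc beta} = count_list (T!k) (Suc beta)"
      unfolding count_list_eq_length_filter length_filter_conv_card by metis
  qed simp
  finally show ?thesis unfolding tableau_data_def by simp
qed

lemma core:
  "(GREATEST n. kashiwara_e_iter (Suc rho) n (Wd (Suc beta) (Suc (Suc rho))) \<noteq> None) = tableau_data T (Suc rho) beta"
  "the (kashiwara_e_iter (Suc rho) (tableau_data T (Suc rho) beta) (Wd (Suc beta) (Suc (Suc rho)))) = Wd (Suc beta) (Suc rho)"
proof -
  define w where "w = Wd (Suc beta) (Suc (Suc rho))"
  have lw: "length w = length cells" unfolding w_def Wd_def by simp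
  have wn: "p < length cells \<Longrightarrow> w!p = F (cells!p)" for p unfolding w_def Wd_def by simp
  have Pl: "PP \<le> length w" unfolding lw PP_def cells_ps by simp
  have c1: "\<forall>p<PP. w!p \<noteq> Suc rho"
  proof (intro allI impI notI)
    fix p assume p: "p < PP" and wp: "w!p = Suc rho"
    obtain k c where kc: "cells!p = (k,c)" by (cases "cells!p")
    have pl: "p < length cells" using p Pl lw by simp
    have v: "k < r" "c < len k" using cells_valid[OF pl kc] by auto
    have Cc: "C \<le> c" using pos_pre[OF p kc] .
    have "F (k,c) = Suc rho" using wp wn[OF pl] kc by simp
    then have "k = rho \<and> T!k!c \<le> beta" using E1[OF v] by blast
    then have "c < C" using R v by auto
    then show False using Cc by simp
  qed
  have c2: "\<forall>q. PP \<le> q \<and> q < length w \<and> w!q = Suc (Suc rho) \<longrightarrow> PP < q \<and> w!(q-1) = Suc rho"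
  proof (intro allI impI)
    fix q assume a: "PP \<le> q \<and> q < length w \<and> w!q = Suc (Suc rho)"
    then have ql: "q < length cells" using lw by simp
    note ps = pos_suf[OF conjunct1[OF a] ql]
    obtain k c where kc: "cells!q = (k,c)" by (cases "cells!q")
    have v: "k < r" "c < len k" using cells_valid[OF ql kc] by auto
    have cC: "c < C" using ps kc by simp
    have "k = Suc rho" using E_c2[OF v cC] a wn[OF ql] kc by simp
    have sufeq: "suf = concat (map (\<lambda>c. map (\<lambda>k. (k,c)) [0..<hh c]) (rev [0..<C]))"
      unfolding suf_def col_eq by simp
    have "q - PP \<ge> 1 \<and> suf!(q - PP - 1) = (rho, c)"
      using pred_concat[OF sufeq, of "q - PP" rho c] ps kc \<open>k = Suc rho\<close> by simp
    then have q1: "PP < q" "suf!(q - 1 - PP) = (rho, c)" by auto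
    have "cells!(q-1) = suf!(q - 1 - PP)" using pos_suf[of "q-1"] q1 ql by simp
    then have w1: "w!(q-1) = F (rho, c)" using wn[of "q-1"] ql q1 by simp
    have cr: "c < len rho" using cC CL by simp
    have "T!rho!c \<le> beta" using R[OF cr] cC by simp
    then have "F (rho, c) = Suc rho" using E1[OF rho_r cr] by simp
    then show "PP < q \<and> w!(q-1) = Suc rho" using w1 q1 by simp
  qed
  obtain bs where sig: "signature (Suc rho) w = map mn (filter (\<lambda>k. w!k = Suc (Suc rho)) [0..<PP]) @ concat (map blk bs)"
    using wc_form[OF Pl c1 c2] by blast
  define A where "A = filter (\<lambda>k. w!k = Suc (Suc rho)) [0..<PP]"
  have setA: "set A = {p. p < length cells \<and> cells!p \<in> SS}"
  proof (intro set_eqI iffI)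
    fix p assume "p \<in> set A"
    then have p: "p < PP" "w!p = Suc (Suc rho)" unfolding A_def by auto
    then have pl: "p < length cells" using Pl lw by simp
    obtain k c where kc: "cells!p = (k,c)" by (cases "cells!p")
    have v: "k < r" "c < len k" using cells_valid[OF pl kc] by auto
    have "C \<le> c" using pos_pre[OF p(1) kc] .
    then have "(k,c) \<in> SS" using E2[OF v] p(2) wn[OF pl] kc by simp
    then show "p \<in> {p. p < length cells \<and> cells!p \<in> SS}" using pl kc by simp
  next
    fix p assume "p \<in> {p. p < length cells \<and> cells!p \<in> SS}"
    then have pl: "p < length cells" and inS: "cells!p \<in> SS" by auto
    obtain k c where kc: "cells!p = (k,c)" by (cases "cells!p")
    have v: "k < r" "c < len k" using cells_valid[OF pl kc] by auto
    have e: "C \<le> c \<and> F (k,c) = Suc (Suc rho)" using E2[OF v] inS kc by simp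
    have "p < PP"
    proof (rule ccontr)
      assume "\<not> p < PP"
      then have "snd (cells!p) < C" using pos_suf[of p] pl by (meson not_le)
      then show False using e kc by simp
    qed
    then show "p \<in> set A" unfolding A_def using e wn[OF pl] kc by simp
  qed
  have lenA: "length A = tableau_data T (Suc rho) beta"
  proof -
    have "length A = card (set A)" by (rule distinct_card[symmetric]) (simp add: A_def)
    also have "\<dots> = card SS"
    proof -
      have inj: "inj_on ((!) cells) (set A)" using distinct_cells setA by (intro inj_on_nth) auto
      have img: "(!) cells ` (set A) = SS"
      proof (intro set_eqI iffI)
        fix x assume "x \<in> (!) cells ` set A" then show "x \<in> SS" using setA by auto
      next
        fix x assume xS: "x \<in> SS"
        then have "x \<in> set cells" unfolding set_cells SS_def using rho_r by auto
        then obtain p where "p < length cells" "cells!p = x" by (metis in_set_conv_nth)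
        then show "x \<in> (!) cells ` set A" using setA xS by auto
      qed
      show ?thesis using card_image[OF inj] img by simp
    qed
    finally show ?thesis using card_SS by simp
  qed
  note em = emax[OF sig[folded A_def]]
  show "(GREATEST n. kashiwara_e_iter (Suc rho) n (Wd (Suc beta) (Suc (Suc rho))) \<noteq> None) = tableau_data T (Suc rho) beta"
    using em(1) lenA w_def by simp
  have "upd w (set A) (Suc rho) = Wd (Suc beta) (Suc rho)"
  proof (rule nth_equalityI)
    show "length (upd w (set A) (Suc rho)) = length (Wd (Suc beta) (Suc rho))" using lw by (simp add: Wd_def)
  next
    fix p assume "p < length (upd w (set A) (Suc rho))"
    then have pl: "p < length cells" using lw by simp
    obtain k c where kc: "cells!p = (k,c)" by (cases "cells!p")
    have v: "k < r" "c < len k" using cells_valid[OF pl kc] by auto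
    have "Wd (Suc beta) (Suc rho) ! p = G (k,c)" unfolding Wd_def using pl kc by simp
    also have "\<dots> = (if (k,c) \<in> SS then Suc rho else F (k,c))" using E3 v by simp
    also have "\<dots> = upd w (set A) (Suc rho) ! p"
      using nth_upd[of p w] lw pl setA kc wn[OF pl] by simp
    finally show "upd w (set A) (Suc rho) ! p = Wd (Suc beta) (Suc rho) ! p" by simp
  qed
  then show "the (kashiwara_e_iter (Suc rho) (tableau_data T (Suc rho) beta) (Wd (Suc beta) (Suc (Suc rho)))) = Wd (Suc beta) (Suc rho)"
    using em(2) lenA w_def by simp
qed

end


lemma bzl_transition: "beta \<le> r \<Longrightarrow> Wd (Suc beta) 1 = Wd (Suc (Suc beta)) (Suc (Suc beta))"
  unfolding Wd_def
proof (rule map_cong[OF refl])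
  fix x assume "x \<in> set cells"
  then obtain k c where x: "x = (k,c)" "k < r" "c < len k" unfolding set_cells by auto
  have "Suc k \<le> T!k!c" using G3 x by simp
  then show "St (Suc beta) 1 x = St (Suc (Suc beta)) (Suc (Suc beta)) x"
    unfolding St_def x by auto
qed

lemma initial: "Wd 2 2 = reading_word T"
  unfolding Wd_def rw_cells
proof (rule map_cong[OF refl])
  fix x assume "x \<in> set cells"
  then obtain k c where x: "x = (k,c)" "k < r" "c < len k" unfolding set_cells by auto
  have "Suc k \<le> T!k!c" using G3 x by simp
  then show "St 2 2 x = (case x of (k, c) \<Rightarrow> T ! k ! c)"
    unfolding St_def x by auto
qed

lemma block: "t \<le> beta \<Longrightarrow> beta \<le> r \<Longrightarrow>
  bzl_path (rev [1..<Suc t]) (Wd (Suc beta) (Suc t)) = map (\<lambda>s. tableau_data T s beta) (rev [1..<Suc t])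
  \<and> runw (rev [1..<Suc t]) (Wd (Suc beta) (Suc t)) = Wd (Suc beta) 1"
proof (induction t)
  case 0 then show ?case by simp
next
  case (Suc t)
  have e: "rev [1..<Suc (Suc t)] = Suc t # rev [1..<Suc t]" by simp
  note c = core[of t beta]
  show ?case unfolding e using Suc c by (simp add: Let_def)
qed

lemma whole: "n \<le> r \<Longrightarrow>
  bzl_path (concat (map (\<lambda>k. rev [1..<Suc k]) [1..<Suc n])) (Wd 2 2) = concat (map (\<lambda>k. map (\<lambda>s. tableau_data T s k) (rev [1..<Suc k])) [1..<Suc n])
  \<and> runw (concat (map (\<lambda>k. rev [1..<Suc k]) [1..<Suc n])) (Wd 2 2) = Wd (Suc (Suc n)) (Suc (Suc n))"
proof (induction n)
  case 0 then show ?case by (simp add: numeral_2_eq_2)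
next
  case (Suc n)
  have e: "[1..<Suc (Suc n)] = [1..<Suc n] @ [Suc n]" by simp
  have b: "bzl_path (rev [1..<Suc (Suc n)]) (Wd (Suc (Suc n)) (Suc (Suc n))) = map (\<lambda>s. tableau_data T s (Suc n)) (rev [1..<Suc (Suc n)])
     \<and> runw (rev [1..<Suc (Suc n)]) (Wd (Suc (Suc n)) (Suc (Suc n))) = Wd (Suc (Suc n)) 1"
    using block[of "Suc n" "Suc n"] Suc.prems by simp
  have tr: "Wd (Suc (Suc n)) 1 = Wd (Suc (Suc (Suc n))) (Suc (Suc (Suc n)))"
    using bzl_transition[of "Suc n"] Suc.prems by simp
  show ?case unfolding e using Suc b tr by (simp add: bzl_append runw_append)
qed

end

theorem mainTheorem1:
  fixes r :: nat and lam :: "nat \<Rightarrow> nat" and T :: "nat list list" and i j :: nat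
  assumes "r \<ge> 1"
    and "ssyt_lambda_rho r lam T"
    and "1 \<le> j" and "j \<le> i" and "i \<le> r"
  shows "bzl_path (long_word r) (reading_word T) ! (i * (i - 1) div 2 + j - 1)
           = tableau_data T (i - j + 1) i"
proof -
  interpret t: tab r lam T by (rule tab.intro) (rule assms(2))
  have lw: "long_word r = concat (map (\<lambda>k. rev [1..<Suc k]) [1..<Suc r])"
    by (simp add: long_word_def)
  have b: "bzl_path (long_word r) (reading_word T) = concat (map (\<lambda>k. map (\<lambda>s. tableau_data T s k) (rev [1..<Suc k])) [1..<Suc r])"
    using t.whole[of r] t.initial lw by simp
  have "bzl_path (long_word r) (reading_word T) ! (i * (i - 1) div 2 + j - 1)
      = map (\<lambda>s. tableau_data T s i) (rev [1..<Suc i]) ! (j - 1)"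
    unfolding b by (rule idx) (use assms in auto)
  also have "\<dots> = tableau_data T (rev [1..<Suc i] ! (j - 1)) i"
    using assms by (intro nth_map) simp
  also have "rev [1..<Suc i] ! (j - 1) = i - j + 1"
    using assms by (subst rev_nth) (auto simp del: upt_Suc)
  finally show ?thesis .
qed

end
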